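(* Let $p,q\in\mathbb{C}$ and let $\phi:\mathbb{R}^4\ni(u,s,v,t)\mapsto(u_2,s_2,v_1,t_1)\in\mathbb{R}^4$ be the map defined by $$u_2=v+t\frac{p-q}{s-t},\qquad v_1=u+s\frac{p-q}{s-t},\qquad s_2=\frac{1}{t}+\frac{p-q}{t(u-v)},\qquad t_1=\frac{1}{s}+\frac{p-q}{s(u-v)}.$$ Set $n(u,s,v,t)=(p-q+u-v)t-s(u-v)$ and $d(u,s,v,t)=(p-q+u-v)s-t(u-v)$. Then: (1) $\phi$ is measure preserving with density $m(u,s,v,t)=n(u,s,v,t)\,d(u,s,v,t)$; (2) $\phi$ preserves the Poisson structure $$\Omega=n\,\frac{s}{t}\,\frac{\partial}{\partial u}\wedge\frac{\partial}{\partial s}-d\,\frac{\partial}{\partial u}\wedge\frac{\partial}{\partial t}-n\,\frac{s}{t}\,\frac{\partial}{\partial s}\wedge\frac{\partial}{\partial v}-d\,\frac{\partial}{\partial v}\wedge\frac{\partial}{\partial t},$$ where $n=n(u,s,v,t)$, $d=d(u,s,v,t)$; (3) $\phi$ is a Liouville integrable map.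
   Context: A map $\phi:(u,s,v,t)\mapsto(u_2,s_2,v_1,t_1)$ is called measure preserving with density $m$ if $m(u_2,s_2,v_1,t_1)=\dfrac{\partial(u_2,s_2,v_1,t_1)}{\partial(u,s,v,t)}\,m(u,s,v,t)$, where the fraction denotes the Jacobian determinant of $\phi$. Liouville integrability of a map is meant in the standard sense (preservation of a Poisson structure together with a sufficient number of functionally independent invariants in involution). *)

theory Defs
  imports "HOL-Analysis.Analysis"
begin

(* Coordinates on R^4: x$1 = u, x$2 = s, x$3 = v, x$4 = t.
   c stands for the parameter difference p - q. *)

definition phi_map :: "real \<Rightarrow> real^4 \<Rightarrow> real^4" where
  "phi_map c x = (let u = x$1; s = x$2; v = x$3; t = x$4 in
     vector [v + t * c / (s - t),
             1 / t + c / (t * (u - v)),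
             u + s * c / (s - t),
             1 / s + c / (s * (u - v))])"

definition dom_phi :: "(real^4) set" where
  "dom_phi = {x. x$2 \<noteq> x$4 \<and> x$4 \<noteq> 0 \<and> x$2 \<noteq> 0 \<and> x$1 \<noteq> x$3}"

definition n_fun :: "real \<Rightarrow> real^4 \<Rightarrow> real" where
  "n_fun c x = (c + x$1 - x$3) * x$4 - x$2 * (x$1 - x$3)"

definition d_fun :: "real \<Rightarrow> real^4 \<Rightarrow> real" where
  "d_fun c x = (c + x$1 - x$3) * x$2 - x$4 * (x$1 - x$3)"

text \<open>The bivector Omega as a skew matrix: a du/\ds contributes Omega_us = a, Omega_su = -a.\<close>
definition omega :: "real \<Rightarrow> real^4 \<Rightarrow> real^4^4" where
  "omega c x = (let N = n_fun c x; D = d_fun c x; s = x$2; t = x$4 in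
     (\<chi> i j. if (i, j) = (1, 2) then N * s / t
             else if (i, j) = (2, 1) then - (N * s / t)
             else if (i, j) = (1, 4) then - D
             else if (i, j) = (4, 1) then D
             else if (i, j) = (2, 3) then - (N * s / t)
             else if (i, j) = (3, 2) then N * s / t
             else if (i, j) = (3, 4) then - D
             else if (i, j) = (4, 3) then D
             else 0))"

definition measure_preserving_density ::
  "(real^'n \<Rightarrow> real^'n) \<Rightarrow> (real^'n \<Rightarrow> real) \<Rightarrow> (real^'n) set \<Rightarrow> bool" where
  "measure_preserving_density f m D \<longleftrightarrow>
     (\<forall>x\<in>D. f differentiable (at x) \<and>
        m (f x) = det (jacobian f (at x)) * m x)"

definition pd :: "(real^'n \<Rightarrow> real) \<Rightarrow> 'n \<Rightarrow> real^'n \<Rightarrow> real" where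
  "pd g i x = frechet_derivative g (at x) (axis i 1)"

definition grad :: "(real^'n \<Rightarrow> real) \<Rightarrow> real^'n \<Rightarrow> real^'n" where
  "grad g x = (\<chi> i. pd g i x)"

definition poisson_structure :: "(real^'n \<Rightarrow> real^'n^'n) \<Rightarrow> (real^'n) set \<Rightarrow> bool" where
  "poisson_structure P D \<longleftrightarrow> open D \<and>
     (\<forall>x\<in>D. transpose (P x) = - P x) \<and>
     (\<forall>x\<in>D. \<forall>i j. (\<lambda>y. P y $ i $ j) differentiable (at x)) \<and>
     (\<forall>x\<in>D. \<forall>i j k.
        (\<Sum>l\<in>UNIV. P x $ l $ i * pd (\<lambda>y. P y $ j $ k) l x
                  + P x $ l $ j * pd (\<lambda>y. P y $ k $ i) l x
                  + P x $ l $ k * pd (\<lambda>y. P y $ i $ j) l x) = 0)"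

definition preserves_poisson ::
  "(real^'n \<Rightarrow> real^'n) \<Rightarrow> (real^'n \<Rightarrow> real^'n^'n) \<Rightarrow> (real^'n) set \<Rightarrow> bool" where
  "preserves_poisson f P D \<longleftrightarrow>
     (\<forall>x\<in>D. f x \<in> D \<longrightarrow> f differentiable (at x) \<and>
        jacobian f (at x) ** P x ** transpose (jacobian f (at x)) = P (f x))"

definition pbracket :: "(real^'n \<Rightarrow> real^'n^'n) \<Rightarrow> (real^'n \<Rightarrow> real) \<Rightarrow> (real^'n \<Rightarrow> real) \<Rightarrow> real^'n \<Rightarrow> real" where
  "pbracket P F G x = grad F x \<bullet> (P x *v grad G x)"

text \<open>Liouville integrability: a preserved Poisson structure of (generic = maximal) rank 2r
  on D, together with N - r invariants (N the dimension) that are pairwise in involution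
  and functionally independent (gradients linearly independent on a dense subset of D).\<close>
definition liouville_integrable :: "(real^'n \<Rightarrow> real^'n) \<Rightarrow> (real^'n) set \<Rightarrow> bool" where
  "liouville_integrable f D \<longleftrightarrow>
     (\<exists>P r Fs. poisson_structure P D \<and> preserves_poisson f P D \<and>
        (\<forall>x\<in>D. rank (P x) \<le> 2 * r) \<and> (\<exists>x\<in>D. rank (P x) = 2 * r) \<and>
        length Fs = CARD('n) - r \<and>
        (\<forall>F\<in>set Fs. \<forall>x\<in>D. F differentiable (at x)) \<and>
        (\<forall>F\<in>set Fs. \<forall>x\<in>D. f x \<in> D \<longrightarrow> F (f x) = F x) \<and>
        (\<forall>F\<in>set Fs. \<forall>G\<in>set Fs. \<forall>x\<in>D. pbracket P F G x = 0) \<and>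
        D \<subseteq> closure {x\<in>D. distinct (map (\<lambda>F. grad F x) Fs) \<and>
                               independent (set (map (\<lambda>F. grad F x) Fs))})"

end

theory Submission
  imports Defs
begin


lemma vector_4 [simp]:
 "(vector [x,y,z,w] ::('a::zero)^4)$1 = x"
 "(vector [x,y,z,w] ::('a::zero)^4)$2 = y"
 "(vector [x,y,z,w] ::('a::zero)^4)$3 = z"
 "(vector [x,y,z,w] ::('a::zero)^4)$4 = w"
  unfolding vector_def by simp_all

lemma has_derivative_vec_nth_at [derivative_intros]:
  "((\<lambda>x::real^'n. x $ i) has_derivative (\<lambda>h. h $ i)) (at x within S)"
  by (rule bounded_linear_imp_has_derivative) (rule bounded_linear_vec_nth)

lemma inner_vector_4: "(vector [a,b,c,d] :: real^4) \<bullet> h = a * h$1 + b * h$2 + c * h$3 + d * h$4"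
  unfolding inner_vec_def sum_4 by simp

lemma has_derivative_cart4:
  fixes f :: "real^'n \<Rightarrow> real^'m"
  assumes d: "\<And>i. ((\<lambda>x. f x $ i) has_derivative (\<lambda>h. M $ i \<bullet> h)) (at a)"
  shows "(f has_derivative (\<lambda>h. M *v h)) (at a)"
proof -
  have e2: "\<And>i x. M $ i \<bullet> x = (M *v x) $ i" by (simp add: matrix_vector_mult_def inner_vec_def)
  have be: "\<And>y::real^'m. (\<Sum>i\<in>UNIV. (y $ i) *\<^sub>R axis i 1) = y"
    using basis_expansion by (metis (no_types) scalar_mult_eq_scaleR sum.cong)
  have "((\<lambda>x. \<Sum>i\<in>UNIV. (f x $ i) *\<^sub>R axis i (1::real)) has_derivative (\<lambda>h. \<Sum>i\<in>UNIV. (M $ i \<bullet> h) *\<^sub>R axis i 1)) (at a)"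
    by (intro has_derivative_sum bounded_linear.has_derivative[OF bounded_linear_scaleR_left] d)
  then show ?thesis by (simp only: e2 be)
qed

lemma grad_deriv:
  assumes "(g has_derivative (\<lambda>h. G \<bullet> h)) (at x)"
  shows "pd g i x = G $ i"
  unfolding pd_def frechet_derivative_at[OF assms, symmetric] by (simp add: inner_axis)

definition Jphi :: "real \<Rightarrow> real^4 \<Rightarrow> real^4^4" where
  "Jphi c x = (let u = x$1; s = x$2; v = x$3; t = x$4; w = u - v in
     vector [vector [0, -(t*c/((s-t)*(s-t))), 1, s * c/((s-t)*(s-t))],
             vector [-(c/(t*(w*w))), 0, c/(t*(w*w)), -(1/(t*t)) - c/(t*t*w)],
             vector [1, -(t*c/((s-t)*(s-t))), 0, s * c/((s-t)*(s-t))],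
             vector [-(c/(s*(w*w))), -(1/(s * s)) - c/(s * s * w), c/(s*(w*w)), 0]])"

lemma phi_deriv1:
  fixes x :: "real^4"
  assumes ne: "x$2 - x$4 \<noteq> 0" "x$4 \<noteq> 0" "x$2 \<noteq> 0" "x$1 - x$3 \<noteq> 0"
  shows "((\<lambda>x. phi_map c x $ 1) has_derivative (\<lambda>h. Jphi c x $ 1 \<bullet> h)) (at x)"
proof -
  have ne': "x$4 * (x$1 - x$3) \<noteq> 0" "x$2 * (x$1 - x$3) \<noteq> 0" using ne by auto
  obtain u s v t where hx: "x$1 = u" "x$2 = s" "x$3 = v" "x$4 = t" by blast
  show ?thesis
  unfolding phi_map_def Jphi_def Let_def vector_4
  apply (rule derivative_eq_intros refl ne ne')+
  apply (rule ext)
  apply (simp only: inner_vector_4)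
  subgoal for h
  proof -
    obtain h1 h2 h3 h4 where hh: "h$1 = h1" "h$2 = h2" "h$3 = h3" "h$4 = h4" by blast
    obtain d w where hd: "s - t = d" and hw: "u - v = w" by blast
    have nz: "d \<noteq> 0" "w \<noteq> 0" "s \<noteq> 0" "t \<noteq> 0" using ne unfolding hx hd hw by simp_all
    show ?thesis unfolding hx hh hd hw using nz
      by (simp add: field_simps; simp add: hd[symmetric] hw[symmetric] algebra_simps)
  qed
  done
qed
lemma phi_deriv2:
  fixes x :: "real^4"
  assumes ne: "x$2 - x$4 \<noteq> 0" "x$4 \<noteq> 0" "x$2 \<noteq> 0" "x$1 - x$3 \<noteq> 0"
  shows "((\<lambda>x. phi_map c x $ 2) has_derivative (\<lambda>h. Jphi c x $ 2 \<bullet> h)) (at x)"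
proof -
  have ne': "x$4 * (x$1 - x$3) \<noteq> 0" "x$2 * (x$1 - x$3) \<noteq> 0" using ne by auto
  obtain u s v t where hx: "x$1 = u" "x$2 = s" "x$3 = v" "x$4 = t" by blast
  show ?thesis
  unfolding phi_map_def Jphi_def Let_def vector_4
  apply (rule derivative_eq_intros refl ne ne')+
  apply (rule ext)
  apply (simp only: inner_vector_4)
  subgoal for h
  proof -
    obtain h1 h2 h3 h4 where hh: "h$1 = h1" "h$2 = h2" "h$3 = h3" "h$4 = h4" by blast
    obtain d w where hd: "s - t = d" and hw: "u - v = w" by blast
    have nz: "d \<noteq> 0" "w \<noteq> 0" "s \<noteq> 0" "t \<noteq> 0" using ne unfolding hx hd hw by simp_all
    show ?thesis unfolding hx hh hd hw using nz
      by (simp add: field_simps; simp add: hd[symmetric] hw[symmetric] algebra_simps)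
  qed
  done
qed
lemma phi_deriv3:
  fixes x :: "real^4"
  assumes ne: "x$2 - x$4 \<noteq> 0" "x$4 \<noteq> 0" "x$2 \<noteq> 0" "x$1 - x$3 \<noteq> 0"
  shows "((\<lambda>x. phi_map c x $ 3) has_derivative (\<lambda>h. Jphi c x $ 3 \<bullet> h)) (at x)"
proof -
  have ne': "x$4 * (x$1 - x$3) \<noteq> 0" "x$2 * (x$1 - x$3) \<noteq> 0" using ne by auto
  obtain u s v t where hx: "x$1 = u" "x$2 = s" "x$3 = v" "x$4 = t" by blast
  show ?thesis
  unfolding phi_map_def Jphi_def Let_def vector_4
  apply (rule derivative_eq_intros refl ne ne')+
  apply (rule ext)
  apply (simp only: inner_vector_4)
  subgoal for h
  proof -
    obtain h1 h2 h3 h4 where hh: "h$1 = h1" "h$2 = h2" "h$3 = h3" "h$4 = h4" by blast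
    obtain d w where hd: "s - t = d" and hw: "u - v = w" by blast
    have nz: "d \<noteq> 0" "w \<noteq> 0" "s \<noteq> 0" "t \<noteq> 0" using ne unfolding hx hd hw by simp_all
    show ?thesis unfolding hx hh hd hw using nz
      by (simp add: field_simps; simp add: hd[symmetric] hw[symmetric] algebra_simps)
  qed
  done
qed
lemma phi_deriv4:
  fixes x :: "real^4"
  assumes ne: "x$2 - x$4 \<noteq> 0" "x$4 \<noteq> 0" "x$2 \<noteq> 0" "x$1 - x$3 \<noteq> 0"
  shows "((\<lambda>x. phi_map c x $ 4) has_derivative (\<lambda>h. Jphi c x $ 4 \<bullet> h)) (at x)"
proof -
  have ne': "x$4 * (x$1 - x$3) \<noteq> 0" "x$2 * (x$1 - x$3) \<noteq> 0" using ne by auto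
  obtain u s v t where hx: "x$1 = u" "x$2 = s" "x$3 = v" "x$4 = t" by blast
  show ?thesis
  unfolding phi_map_def Jphi_def Let_def vector_4
  apply (rule derivative_eq_intros refl ne ne')+
  apply (rule ext)
  apply (simp only: inner_vector_4)
  subgoal for h
  proof -
    obtain h1 h2 h3 h4 where hh: "h$1 = h1" "h$2 = h2" "h$3 = h3" "h$4 = h4" by blast
    obtain d w where hd: "s - t = d" and hw: "u - v = w" by blast
    have nz: "d \<noteq> 0" "w \<noteq> 0" "s \<noteq> 0" "t \<noteq> 0" using ne unfolding hx hd hw by simp_all
    show ?thesis unfolding hx hh hd hw using nz
      by (simp add: field_simps; simp add: hd[symmetric] hw[symmetric] algebra_simps)
  qed
  done
qed


lemma det_4:
  "det (A::'a::comm_ring_1^4^4) =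
    A$1$1 * A$2$2 * A$3$3 * A$4$4 - A$1$1 * A$2$2 * A$3$4 * A$4$3
  - A$1$1 * A$2$3 * A$3$2 * A$4$4 + A$1$1 * A$2$3 * A$3$4 * A$4$2
  + A$1$1 * A$2$4 * A$3$2 * A$4$3 - A$1$1 * A$2$4 * A$3$3 * A$4$2
  - A$1$2 * A$2$1 * A$3$3 * A$4$4 + A$1$2 * A$2$1 * A$3$4 * A$4$3
  + A$1$2 * A$2$3 * A$3$1 * A$4$4 - A$1$2 * A$2$3 * A$3$4 * A$4$1
  - A$1$2 * A$2$4 * A$3$1 * A$4$3 + A$1$2 * A$2$4 * A$3$3 * A$4$1
  + A$1$3 * A$2$1 * A$3$2 * A$4$4 - A$1$3 * A$2$1 * A$3$4 * A$4$2
  - A$1$3 * A$2$2 * A$3$1 * A$4$4 + A$1$3 * A$2$2 * A$3$4 * A$4$1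
  + A$1$3 * A$2$4 * A$3$1 * A$4$2 - A$1$3 * A$2$4 * A$3$2 * A$4$1
  - A$1$4 * A$2$1 * A$3$2 * A$4$3 + A$1$4 * A$2$1 * A$3$3 * A$4$2
  + A$1$4 * A$2$2 * A$3$1 * A$4$3 - A$1$4 * A$2$2 * A$3$3 * A$4$1
  - A$1$4 * A$2$3 * A$3$1 * A$4$2 + A$1$4 * A$2$3 * A$3$2 * A$4$1"
proof -
  have f1: "finite {2::4, 3, 4}" "1 \<notin> {2::4, 3, 4}" by auto
  have f2: "finite {3::4, 4}" "2 \<notin> {3::4, 4}" by auto
  have f3: "finite {4::4}" "3 \<notin> {4::4}" by auto
  show ?thesis
    unfolding det_def UNIV_4
    unfolding sum_over_permutations_insert[OF f1]
    unfolding sum_over_permutations_insert[OF f2]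
    unfolding sum_over_permutations_insert[OF f3]
    unfolding permutes_sing
    by (simp add: sign_swap_id permutation_swap_id permutation_compose sign_compose sign_id swap_id_eq algebra_simps)
qed

lemma dom_phiD:
  assumes "x \<in> dom_phi"
  shows "x$2 - x$4 \<noteq> 0" "x$4 \<noteq> 0" "x$2 \<noteq> 0" "x$1 - x$3 \<noteq> 0"
  using assms by (auto simp: dom_phi_def)

lemma phi_deriv:
  assumes "x \<in> dom_phi"
  shows "(phi_map c has_derivative (\<lambda>h. Jphi c x *v h)) (at x)"
proof (rule has_derivative_cart4)
  fix i :: 4
  note ne = dom_phiD[OF assms]
  consider "i = 1" | "i = 2" | "i = 3" | "i = 4" using exhaust_4 by blast
  then show "((\<lambda>x. phi_map c x $ i) has_derivative (\<lambda>h. Jphi c x $ i \<bullet> h)) (at x)"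
    by cases (use phi_deriv1[OF ne] phi_deriv2[OF ne] phi_deriv3[OF ne] phi_deriv4[OF ne] in auto)
qed

lemma jacobian_phi:
  assumes "x \<in> dom_phi"
  shows "jacobian (phi_map c) (at x) = Jphi c x"
  unfolding jacobian_def frechet_derivative_at[OF phi_deriv[OF assms], symmetric] by simp

lemma det_pattern:
  "det (vector [vector [0, p, 1, q], vector [-b1, 0, b1, k1], vector [1, p, 0, q], vector [-b2, k2, b2, 0]] :: real^4^4) = k1 * k2"
  unfolding det_4 vector_4 by (simp add: algebra_simps)

lemma det_Jphi:
  assumes "x \<in> dom_phi"
  shows "det (Jphi c x) = (-(1/(x$4*x$4)) - c/(x$4*x$4*(x$1 - x$3))) * (-(1/(x$2 * x$2)) - c/(x$2 * x$2 * (x$1 - x$3)))"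
  unfolding Jphi_def Let_def det_pattern ..

lemma n_phi:
  assumes "x \<in> dom_phi"
  shows "n_fun c (phi_map c x) = (x$1 - x$3 + c) * d_fun c x / (x$2 * x$4 * (x$1 - x$3))"
proof -
  note ne = dom_phiD[OF assms]
  obtain u s v t where hx: "x$1 = u" "x$2 = s" "x$3 = v" "x$4 = t" by blast
  obtain d w where hd: "s - t = d" and hw: "u - v = w" by blast
  have nz: "d \<noteq> 0" "w \<noteq> 0" "s \<noteq> 0" "t \<noteq> 0" using ne unfolding hx hd hw by simp_all
  show ?thesis
    unfolding n_fun_def d_fun_def phi_map_def Let_def vector_4 hx hd hw using nz
    by (simp add: field_simps; simp add: hd[symmetric] hw[symmetric] algebra_simps)
qed

lemma d_phi:
  assumes "x \<in> dom_phi"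
  shows "d_fun c (phi_map c x) = (x$1 - x$3 + c) * n_fun c x / (x$2 * x$4 * (x$1 - x$3))"
proof -
  note ne = dom_phiD[OF assms]
  obtain u s v t where hx: "x$1 = u" "x$2 = s" "x$3 = v" "x$4 = t" by blast
  obtain d w where hd: "s - t = d" and hw: "u - v = w" by blast
  have nz: "d \<noteq> 0" "w \<noteq> 0" "s \<noteq> 0" "t \<noteq> 0" using ne unfolding hx hd hw by simp_all
  show ?thesis
    unfolding n_fun_def d_fun_def phi_map_def Let_def vector_4 hx hd hw using nz
    by (simp add: field_simps; simp add: hd[symmetric] hw[symmetric] algebra_simps)
qed

lemma measure_part:
  "measure_preserving_density (phi_map c) (\<lambda>x. n_fun c x * d_fun c x) dom_phi"
  unfolding measure_preserving_density_def
proof (intro ballI conjI)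
  fix x assume x: "x \<in> dom_phi"
  show "phi_map c differentiable at x" using phi_deriv[OF x] by (auto simp: differentiable_def)
  note ne = dom_phiD[OF x]
  obtain u s v t where hx: "x$1 = u" "x$2 = s" "x$3 = v" "x$4 = t" by blast
  obtain d w where hd: "s - t = d" and hw: "u - v = w" by blast
  have nz: "d \<noteq> 0" "w \<noteq> 0" "s \<noteq> 0" "t \<noteq> 0" using ne unfolding hx hd hw by simp_all
  show "n_fun c (phi_map c x) * d_fun c (phi_map c x) = det (jacobian (phi_map c) (at x)) * (n_fun c x * d_fun c x)"
    unfolding jacobian_phi[OF x] det_Jphi[OF x] n_phi[OF x] d_phi[OF x] hx hw using nz
    by (simp add: field_simps)
qed



definition Afun :: "real \<Rightarrow> real^4 \<Rightarrow> real" where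
  "Afun c y = n_fun c y * y$2 / y$4"

definition alpha :: "4 \<Rightarrow> 4 \<Rightarrow> real" where
  "alpha i j = (if (i,j) = (1,2) \<or> (i,j) = (3,2) then 1 else if (i,j) = (2,1) \<or> (i,j) = (2,3) then -1 else 0)"

definition beta :: "4 \<Rightarrow> 4 \<Rightarrow> real" where
  "beta i j = (if (i,j) = (4,1) \<or> (i,j) = (4,3) then 1 else if (i,j) = (1,4) \<or> (i,j) = (3,4) then -1 else 0)"

lemma omega_entry: "omega c y $ i $ j = alpha i j * Afun c y + beta i j * d_fun c y"
proof -
  have "i = 1 \<or> i = 2 \<or> i = 3 \<or> i = 4" "j = 1 \<or> j = 2 \<or> j = 3 \<or> j = 4" by (rule exhaust_4)+
  then show ?thesis
    unfolding omega_def Let_def alpha_def beta_def Afun_def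
    by (elim disjE) simp_all
qed

lemma alpha_skew: "alpha j i = - alpha i j" and beta_skew: "beta j i = - beta i j"
proof -
  have "i = 1 \<or> i = 2 \<or> i = 3 \<or> i = 4" "j = 1 \<or> j = 2 \<or> j = 3 \<or> j = 4" by (rule exhaust_4)+
  then show "alpha j i = - alpha i j" "beta j i = - beta i j"
    unfolding alpha_def beta_def by (elim disjE; simp)+
qed

definition gA :: "real \<Rightarrow> real^4 \<Rightarrow> real^4" where
  "gA c x = (let u = x$1; s = x$2; v = x$3; t = x$4; N = n_fun c x in
     vector [(t - s) * s / t, (N - (u - v) * s) / t, - ((t - s) * s / t), s * s * (u - v) / (t * t)])"

definition gD :: "real \<Rightarrow> real^4 \<Rightarrow> real^4" where
  "gD c x = (let u = x$1; s = x$2; v = x$3; t = x$4 in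
     vector [s - t, c + u - v, - (s - t), - (u - v)])"

lemma A_deriv:
  fixes x :: "real^4"
  assumes t0: "x$4 \<noteq> 0"
  shows "(Afun c has_derivative (\<lambda>h. gA c x \<bullet> h)) (at x)"
proof -
  obtain u s v t where hx: "x$1 = u" "x$2 = s" "x$3 = v" "x$4 = t" by blast
  show ?thesis
  unfolding Afun_def[abs_def] n_fun_def gA_def Let_def
  apply (rule derivative_eq_intros refl t0)+
  apply (rule ext)
  apply (simp only: inner_vector_4)
  subgoal for h
  proof -
    obtain h1 h2 h3 h4 where hh: "h$1 = h1" "h$2 = h2" "h$3 = h3" "h$4 = h4" by blast
    have nz: "t \<noteq> 0" using t0 hx by simp
    show ?thesis unfolding hx hh using nz
      by (simp add: field_simps)
  qed
  done
qed

lemma D_deriv: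
  fixes x :: "real^4"
  shows "(d_fun c has_derivative (\<lambda>h. gD c x \<bullet> h)) (at x)"
proof -
  show ?thesis
  unfolding d_fun_def[abs_def] gD_def Let_def
  apply (rule derivative_eq_intros refl)+
  apply (rule ext)
  apply (simp only: inner_vector_4)
  apply (simp add: algebra_simps)
  done
qed

lemma omega_entry_deriv:
  assumes "x$4 \<noteq> 0"
  shows "((\<lambda>y. omega c y $ j $ k) has_derivative (\<lambda>h. (alpha j k *\<^sub>R gA c x + beta j k *\<^sub>R gD c x) \<bullet> h)) (at x)"
proof -
  have "((\<lambda>y. alpha j k * Afun c y + beta j k * d_fun c y) has_derivative (\<lambda>h. alpha j k * (gA c x \<bullet> h) + beta j k * (gD c x \<bullet> h))) (at x)"
    by (intro derivative_intros A_deriv[OF assms] D_deriv)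
  then show ?thesis unfolding omega_entry by (simp add: inner_add_left algebra_simps)
qed

lemma pd_omega:
  assumes "x$4 \<noteq> 0"
  shows "pd (\<lambda>y. omega c y $ j $ k) l x = alpha j k * gA c x $ l + beta j k * gD c x $ l"
  using grad_deriv[OF omega_entry_deriv[OF assms]] by simp

lemma jacobi_generic:
  fixes A D :: real and a b :: "real^4"
  assumes "a$3 = - a$1" "b$3 = - b$1"
  shows "(\<Sum>l\<in>UNIV. (alpha l i * A + beta l i * D) * (alpha j k * a$l + beta j k * b$l)
            + (alpha l j * A + beta l j * D) * (alpha k i * a$l + beta k i * b$l)
            + (alpha l k * A + beta l k * D) * (alpha i j * a$l + beta i j * b$l)) = 0"
proof -
  have "i = 1 \<or> i = 2 \<or> i = 3 \<or> i = 4" "j = 1 \<or> j = 2 \<or> j = 3 \<or> j = 4" "k = 1 \<or> k = 2 \<or> k = 3 \<or> k = 4" by (rule exhaust_4)+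
  then show ?thesis
    unfolding sum_4 alpha_def beta_def using assms
    by (elim disjE; simp add: algebra_simps)
qed

lemma open_dom_phi: "open dom_phi"
  unfolding dom_phi_def
  by (intro open_Collect_conj open_Collect_neq continuous_intros)

lemma omega_poisson: "poisson_structure (omega c) dom_phi"
  unfolding poisson_structure_def
proof (intro conjI ballI allI)
  show "open dom_phi" by (rule open_dom_phi)
next
  fix x assume "x \<in> dom_phi"
  show "transpose (omega c x) = - omega c x"
  proof (rule vec_eq_iff[THEN iffD2], intro allI, rule vec_eq_iff[THEN iffD2], intro allI)
    fix i j
    have "alpha j i * Afun c x + beta j i * d_fun c x = - (alpha i j * Afun c x + beta i j * d_fun c x)"
      by (subst alpha_skew, subst beta_skew) simp
    then show "transpose (omega c x) $ i $ j = (- omega c x) $ i $ j"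
      by (simp add: transpose_def omega_entry)
  qed
next
  fix x i j assume x: "x \<in> dom_phi"
  show "(\<lambda>y. omega c y $ i $ j) differentiable at x"
    using omega_entry_deriv[OF dom_phiD(2)[OF x]] by (auto simp: differentiable_def)
next
  fix x i j k assume x: "x \<in> dom_phi"
  note t0 = dom_phiD(2)[OF x]
  have a: "gA c x $ 3 = - gA c x $ 1" "gD c x $ 3 = - gD c x $ 1"
    unfolding gA_def gD_def Let_def vector_4 by simp_all
  show "(\<Sum>l\<in>UNIV. omega c x $ l $ i * pd (\<lambda>y. omega c y $ j $ k) l x
                  + omega c x $ l $ j * pd (\<lambda>y. omega c y $ k $ i) l x
                  + omega c x $ l $ k * pd (\<lambda>y. omega c y $ i $ j) l x) = 0"
    unfolding pd_omega[OF t0] unfolding omega_entry by (rule jacobi_generic[OF a])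
qed



lemma conj_entry: "(A ** B ** transpose A) $ i $ j = (\<Sum>k\<in>UNIV. \<Sum>l\<in>UNIV. A$i$l * B$l$k * A$j$k)"
  by (simp add: matrix_matrix_mult_def transpose_def sum_distrib_right)

lemma phi_comp:
  "phi_map c x $ 1 = x$3 + x$4 * c / (x$2 - x$4)"
  "phi_map c x $ 2 = 1 / x$4 + c / (x$4 * (x$1 - x$3))"
  "phi_map c x $ 3 = x$1 + x$2 * c / (x$2 - x$4)"
  "phi_map c x $ 4 = 1 / x$2 + c / (x$2 * (x$1 - x$3))"
  unfolding phi_map_def Let_def vector_4 by simp_all

lemma phi_comp24:
  assumes "x \<in> dom_phi"
  shows "phi_map c x $ 2 = (x$1 - x$3 + c) / (x$4 * (x$1 - x$3))"
    "phi_map c x $ 4 = (x$1 - x$3 + c) / (x$2 * (x$1 - x$3))"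
  unfolding phi_comp using dom_phiD[OF assms] by (simp_all add: field_simps)

lemma e_nz:
  assumes "x \<in> dom_phi" "phi_map c x \<in> dom_phi"
  shows "x$1 - x$3 + c \<noteq> 0"
proof
  assume h: "x$1 - x$3 + c = 0"
  note ne = dom_phiD[OF assms(1)]
  have "phi_map c x $ 4 = (x$1 - x$3 + c) / (x$2 * (x$1 - x$3))"
    unfolding phi_comp using ne by (simp add: field_simps)
  then have "phi_map c x $ 4 = 0" using h by simp
  then show False using dom_phiD(2)[OF assms(2)] by simp
qed

lemma A_phi:
  assumes x: "x \<in> dom_phi" and px: "phi_map c x \<in> dom_phi"
  shows "Afun c (phi_map c x) = (x$1 - x$3 + c) * d_fun c x / (x$4 * x$4 * (x$1 - x$3))"
proof -
  note ne = dom_phiD[OF x]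
  have e: "x$1 - x$3 + c \<noteq> 0" by (rule e_nz[OF x px])
  obtain u s v t where hx: "x$1 = u" "x$2 = s" "x$3 = v" "x$4 = t" by blast
  obtain w D e where hw: "u - v = w" and hD: "d_fun c x = D" and he: "w + c = e" by blast
  have nz: "w \<noteq> 0" "s \<noteq> 0" "t \<noteq> 0" "e \<noteq> 0" using ne e unfolding hx hw he by simp_all
  show ?thesis
    unfolding Afun_def n_phi[OF x] phi_comp24[OF x] hD hx hw he using nz
    by (simp add: field_simps)
qed

lemma omega_preserve:
  assumes x: "x \<in> dom_phi" and px: "phi_map c x \<in> dom_phi"
  shows "Jphi c x ** omega c x ** transpose (Jphi c x) = omega c (phi_map c x)"
proof -
  note ne = dom_phiD[OF x]
  have e0: "x$1 - x$3 + c \<noteq> 0" by (rule e_nz[OF x px])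
  obtain u s v t where hx: "x$1 = u" "x$2 = s" "x$3 = v" "x$4 = t" by blast
  obtain d w e N D where hd: "s - t = d" and hw: "u - v = w" and he: "w + c = e"
    and hN: "n_fun c x = N" and hD: "d_fun c x = D" by blast
  have nz: "d \<noteq> 0" "w \<noteq> 0" "s \<noteq> 0" "t \<noteq> 0" "e \<noteq> 0" using ne e0 unfolding hx hd hw he by simp_all
  have P1: "\<And>i j. omega c x $ i $ j = alpha i j * (N * s / t) + beta i j * D"
    unfolding omega_entry Afun_def hN hD hx ..
  have P2: "\<And>i j. omega c (phi_map c x) $ i $ j = alpha i j * (e * D / (t*t*w)) + beta i j * (e * N / (s*t*w))"
    unfolding omega_entry A_phi[OF x px] d_phi[OF x] hN hD hx hw he by (simp add: mult.commute)
  have J: "Jphi c x = vector [vector [0, -(t*c/(d*d)), 1, s * c/(d*d)],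
             vector [-(c/(t*(w*w))), 0, c/(t*(w*w)), -(1/(t*t)) - c/(t*t*w)],
             vector [1, -(t*c/(d*d)), 0, s * c/(d*d)],
             vector [-(c/(s*(w*w))), -(1/(s * s)) - c/(s * s * w), c/(s*(w*w)), 0]]"
    unfolding Jphi_def Let_def hx hd hw ..
  show ?thesis
  proof (rule vec_eq_iff[THEN iffD2], intro allI, rule vec_eq_iff[THEN iffD2], intro allI)
    fix i j :: 4
    have "i = 1 \<or> i = 2 \<or> i = 3 \<or> i = 4" "j = 1 \<or> j = 2 \<or> j = 3 \<or> j = 4" by (rule exhaust_4)+
    then show "(Jphi c x ** omega c x ** transpose (Jphi c x)) $ i $ j = omega c (phi_map c x) $ i $ j"
      unfolding conj_entry sum_4 P1 P2 J using nz
      by (elim disjE; simp add: alpha_def beta_def; simp add: field_simps; simp add: hd[symmetric] hw[symmetric] he[symmetric] algebra_simps)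
  qed
qed



definition qa :: "4 \<Rightarrow> 4 \<Rightarrow> real" where
  "qa i j = (if (i,j) = (1,2) then 1 else if (i,j) = (2,1) then -1
     else if (i,j) = (3,2) then 1 else if (i,j) = (2,3) then -1
     else if (i,j) = (1,4) then -2 else if (i,j) = (4,1) then 2
     else if (i,j) = (3,4) then 2 else if (i,j) = (4,3) then -2 else 0)"

definition qb :: "4 \<Rightarrow> 4 \<Rightarrow> real" where
  "qb i j = (if (i,j) = (1,2) then -2 else if (i,j) = (2,1) then 2
     else if (i,j) = (3,2) then 2 else if (i,j) = (2,3) then -2 else 0)"

definition qe :: "4 \<Rightarrow> 4 \<Rightarrow> real" where
  "qe i j = (if (i,j) = (1,4) then -1 else if (i,j) = (4,1) then 1
     else if (i,j) = (3,4) then -1 else if (i,j) = (4,3) then 1 else 0)"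

definition Qp :: "real^4 \<Rightarrow> real^4^4" where
  "Qp y = (\<chi> i j. qa i j * y$4 + qb i j * y$2 + qe i j * (y$4 * y$4 / y$2))"

lemma Qp_entry: "Qp y $ i $ j = qa i j * y$4 + qb i j * y$2 + qe i j * (y$4 * y$4 / y$2)"
  unfolding Qp_def by simp

lemma q_skew: "qa j i = - qa i j" "qb j i = - qb i j" "qe j i = - qe i j"
proof -
  have "i = 1 \<or> i = 2 \<or> i = 3 \<or> i = 4" "j = 1 \<or> j = 2 \<or> j = 3 \<or> j = 4" by (rule exhaust_4)+
  then show "qa j i = - qa i j" "qb j i = - qb i j" "qe j i = - qe i j"
    unfolding qa_def qb_def qe_def by (elim disjE; simp)+
qed

definition gq :: "real^4 \<Rightarrow> real^4" where
  "gq x = vector [0, - (x$4 * x$4 / (x$2 * x$2)), 0, 2 * x$4 / x$2]"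

lemma q_deriv:
  fixes x :: "real^4"
  assumes s0: "x$2 \<noteq> 0"
  shows "((\<lambda>y. y$4 * y$4 / y$2) has_derivative (\<lambda>h. gq x \<bullet> h)) (at x)"
proof -
  obtain u s v t where hx: "x$1 = u" "x$2 = s" "x$3 = v" "x$4 = t" by blast
  show ?thesis
  unfolding gq_def
  apply (rule derivative_eq_intros refl s0)+
  apply (rule ext)
  apply (simp only: inner_vector_4)
  subgoal for h
  proof -
    obtain h1 h2 h3 h4 where hh: "h$1 = h1" "h$2 = h2" "h$3 = h3" "h$4 = h4" by blast
    have nz: "s \<noteq> 0" using s0 hx by simp
    show ?thesis unfolding hx hh using nz
      by (simp add: field_simps)
  qed
  done
qed

lemma Qp_entry_deriv:
  assumes "x$2 \<noteq> 0"
  shows "((\<lambda>y. Qp y $ j $ k) has_derivative (\<lambda>h. (qa j k *\<^sub>R (vector [0,0,0,1] :: real^4) + qb j k *\<^sub>R vector [0,1,0,0] + qe j k *\<^sub>R gq x) \<bullet> h)) (at x)"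
proof -
  have "((\<lambda>y. qa j k * y$4 + qb j k * y$2 + qe j k * (y$4 * y$4 / y$2)) has_derivative (\<lambda>h. qa j k * h$4 + qb j k * h$2 + qe j k * (gq x \<bullet> h))) (at x)"
    by (intro derivative_intros q_deriv[OF assms])
  then show ?thesis unfolding Qp_entry by (simp add: inner_add_left inner_vector_4 algebra_simps)
qed

lemma pd_Qp:
  assumes "x$2 \<noteq> 0"
  shows "pd (\<lambda>y. Qp y $ j $ k) l x = qa j k * (vector [0,0,0,1] :: real^4) $ l + qb j k * (vector [0,1,0,0] :: real^4) $ l + qe j k * gq x $ l"
  using grad_deriv[OF Qp_entry_deriv[OF assms]] by simp

lemma jacobi_Q:
  fixes s t :: real
  assumes "s \<noteq> 0"
  defines "gv \<equiv> (vector [0, - (t * t / (s * s)), 0, 2 * t / s] :: real^4)"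
  shows "(\<Sum>l\<in>UNIV. (qa l i * t + qb l i * s + qe l i * (t * t / s)) * (qa j k * (vector [0,0,0,1] :: real^4) $ l + qb j k * (vector [0,1,0,0] :: real^4) $ l + qe j k * gv $ l)
            + (qa l j * t + qb l j * s + qe l j * (t * t / s)) * (qa k i * (vector [0,0,0,1] :: real^4) $ l + qb k i * (vector [0,1,0,0] :: real^4) $ l + qe k i * gv $ l)
            + (qa l k * t + qb l k * s + qe l k * (t * t / s)) * (qa i j * (vector [0,0,0,1] :: real^4) $ l + qb i j * (vector [0,1,0,0] :: real^4) $ l + qe i j * gv $ l)) = 0"
proof -
  have "i = 1 \<or> i = 2 \<or> i = 3 \<or> i = 4" "j = 1 \<or> j = 2 \<or> j = 3 \<or> j = 4" "k = 1 \<or> k = 2 \<or> k = 3 \<or> k = 4" by (rule exhaust_4)+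
  then show ?thesis
    unfolding sum_4 vector_4 gv_def using assms(1)
    by (elim disjE; simp add: qa_def qb_def qe_def; simp add: field_simps)
qed

lemma Qp_poisson: "poisson_structure Qp dom_phi"
  unfolding poisson_structure_def
proof (intro conjI ballI allI)
  show "open dom_phi" by (rule open_dom_phi)
next
  fix x assume "x \<in> dom_phi"
  show "transpose (Qp x) = - Qp x"
  proof (rule vec_eq_iff[THEN iffD2], intro allI, rule vec_eq_iff[THEN iffD2], intro allI)
    fix i j :: 4
    have "qa j i * x$4 + qb j i * x$2 + qe j i * (x$4 * x$4 / x$2) = - (qa i j * x$4 + qb i j * x$2 + qe i j * (x$4 * x$4 / x$2))"
      by (subst q_skew(1), subst q_skew(2), subst q_skew(3)) simp
    then show "transpose (Qp x) $ i $ j = (- Qp x) $ i $ j"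
      by (simp add: transpose_def Qp_entry)
  qed
next
  fix x i j assume x: "x \<in> dom_phi"
  show "(\<lambda>y. Qp y $ i $ j) differentiable at x"
    using Qp_entry_deriv[OF dom_phiD(3)[OF x]] by (auto simp: differentiable_def)
next
  fix x i j k assume x: "x \<in> dom_phi"
  note s0 = dom_phiD(3)[OF x]
  show "(\<Sum>l\<in>UNIV. Qp x $ l $ i * pd (\<lambda>y. Qp y $ j $ k) l x
                  + Qp x $ l $ j * pd (\<lambda>y. Qp y $ k $ i) l x
                  + Qp x $ l $ k * pd (\<lambda>y. Qp y $ i $ j) l x) = 0"
    unfolding pd_Qp[OF s0] unfolding Qp_entry gq_def by (rule jacobi_Q[OF s0])
qed

lemma Qp_preserve:
  assumes x: "x \<in> dom_phi" and px: "phi_map c x \<in> dom_phi"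
  shows "Jphi c x ** Qp x ** transpose (Jphi c x) = Qp (phi_map c x)"
proof -
  note ne = dom_phiD[OF x]
  have e0: "x$1 - x$3 + c \<noteq> 0" by (rule e_nz[OF x px])
  obtain u s v t where hx: "x$1 = u" "x$2 = s" "x$3 = v" "x$4 = t" by blast
  obtain d w e where hd: "s - t = d" and hw: "u - v = w" and he: "w + c = e" by blast
  have nz: "d \<noteq> 0" "w \<noteq> 0" "s \<noteq> 0" "t \<noteq> 0" "e \<noteq> 0" using ne e0 unfolding hx hd hw he by simp_all
  have P1: "\<And>i j. Qp x $ i $ j = qa i j * t + qb i j * s + qe i j * (t * t / s)"
    unfolding Qp_entry hx ..
  have P2: "\<And>i j. Qp (phi_map c x) $ i $ j = qa i j * (e / (s * w)) + qb i j * (e / (t * w)) + qe i j * ((e / (s * w)) * (e / (s * w)) / (e / (t * w)))"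
    unfolding Qp_entry phi_comp24[OF x] hx hw he ..
  have J: "Jphi c x = vector [vector [0, -(t*c/(d*d)), 1, s * c/(d*d)],
             vector [-(c/(t*(w*w))), 0, c/(t*(w*w)), -(1/(t*t)) - c/(t*t*w)],
             vector [1, -(t*c/(d*d)), 0, s * c/(d*d)],
             vector [-(c/(s*(w*w))), -(1/(s * s)) - c/(s * s * w), c/(s*(w*w)), 0]]"
    unfolding Jphi_def Let_def hx hd hw ..
  show ?thesis
  proof (rule vec_eq_iff[THEN iffD2], intro allI, rule vec_eq_iff[THEN iffD2], intro allI)
    fix i j :: 4
    have "i = 1 \<or> i = 2 \<or> i = 3 \<or> i = 4" "j = 1 \<or> j = 2 \<or> j = 3 \<or> j = 4" by (rule exhaust_4)+
    then show "(Jphi c x ** Qp x ** transpose (Jphi c x)) $ i $ j = Qp (phi_map c x) $ i $ j"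
      unfolding conj_entry sum_4 P1 P2 J using nz
      by (elim disjE; simp add: qa_def qb_def qe_def; simp add: field_simps; simp add: hd[symmetric] hw[symmetric] he[symmetric] algebra_simps)
  qed
qed



lemma grad_eq:
  assumes "(g has_derivative (\<lambda>h. G \<bullet> h)) (at x)"
  shows "grad g x = G"
  unfolding grad_def grad_deriv[OF assms] by simp

definition F1 :: "real^4 \<Rightarrow> real" where "F1 x = x$2 / x$4"
definition F2 :: "real \<Rightarrow> real^4 \<Rightarrow> real" where "F2 c x = (x$1 - x$3) * (x$1 - x$3 + c)"

lemma F1_deriv:
  fixes x :: "real^4"
  assumes t0: "x$4 \<noteq> 0"
  shows "(F1 has_derivative (\<lambda>h. vector [0, 1 / x$4, 0, - (x$2 / (x$4 * x$4))] \<bullet> h)) (at x)"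
proof -
  obtain u s v t where hx: "x$1 = u" "x$2 = s" "x$3 = v" "x$4 = t" by blast
  show ?thesis
  unfolding F1_def[abs_def]
  apply (rule derivative_eq_intros refl t0)+
  apply (rule ext)
  apply (simp only: inner_vector_4)
  subgoal for h
  proof -
    obtain h1 h2 h3 h4 where hh: "h$1 = h1" "h$2 = h2" "h$3 = h3" "h$4 = h4" by blast
    have nz: "t \<noteq> 0" using t0 hx by simp
    show ?thesis unfolding hx hh using nz
      by (simp add: field_simps)
  qed
  done
qed

lemma F2_deriv:
  fixes x :: "real^4"
  shows "(F2 c has_derivative (\<lambda>h. vector [2 * (x$1 - x$3) + c, 0, - (2 * (x$1 - x$3) + c), 0] \<bullet> h)) (at x)"
  unfolding F2_def[abs_def]
  apply (rule derivative_eq_intros refl)+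
  apply (rule ext)
  apply (simp only: inner_vector_4)
  apply (simp add: algebra_simps)
  done

lemma F1_inv:
  assumes x: "x \<in> dom_phi" and px: "phi_map c x \<in> dom_phi"
  shows "F1 (phi_map c x) = F1 x"
proof -
  note ne = dom_phiD[OF x]
  have e0: "x$1 - x$3 + c \<noteq> 0" by (rule e_nz[OF x px])
  obtain u s v t where hx: "x$1 = u" "x$2 = s" "x$3 = v" "x$4 = t" by blast
  obtain w e where hw: "u - v = w" and he: "w + c = e" by blast
  have nz: "w \<noteq> 0" "s \<noteq> 0" "t \<noteq> 0" "e \<noteq> 0" using ne e0 unfolding hx hw he by simp_all
  show ?thesis unfolding F1_def phi_comp24[OF x] hx hw he using nz by (simp add: field_simps)
qed

lemma F2_inv:
  assumes x: "x \<in> dom_phi"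
  shows "F2 c (phi_map c x) = F2 c x"
proof -
  note ne = dom_phiD[OF x]
  obtain u s v t where hx: "x$1 = u" "x$2 = s" "x$3 = v" "x$4 = t" by blast
  obtain d where hd: "s - t = d" by blast
  have nz: "d \<noteq> 0" using ne unfolding hx hd by simp_all
  have "phi_map c x $ 1 - phi_map c x $ 3 = - (x$1 - x$3) - c"
    unfolding phi_comp hx hd using nz
    by (simp add: field_simps; simp add: hd[symmetric] algebra_simps)
  then show ?thesis unfolding F2_def by (simp only: ) (simp add: algebra_simps)
qed

lemma grad_F1: "x$4 \<noteq> 0 \<Longrightarrow> grad F1 x = vector [0, 1 / x$4, 0, - (x$2 / (x$4 * x$4))]"
  by (rule grad_eq[OF F1_deriv])

lemma grad_F2: "grad (F2 c) x = vector [2 * (x$1 - x$3) + c, 0, - (2 * (x$1 - x$3) + c), 0]"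
  by (rule grad_eq[OF F2_deriv])

lemma mv4: "(M :: real^4^4) *v v = vector [M$1$1 * v$1 + M$1$2 * v$2 + M$1$3 * v$3 + M$1$4 * v$4,
   M$2$1 * v$1 + M$2$2 * v$2 + M$2$3 * v$3 + M$2$4 * v$4,
   M$3$1 * v$1 + M$3$2 * v$2 + M$3$3 * v$3 + M$3$4 * v$4,
   M$4$1 * v$1 + M$4$2 * v$2 + M$4$3 * v$3 + M$4$4 * v$4]"
proof (rule vec_eq_iff[THEN iffD2], intro allI)
  fix i :: 4
  have "i = 1 \<or> i = 2 \<or> i = 3 \<or> i = 4" by (rule exhaust_4)
  then show "(M *v v) $ i = vector [M$1$1 * v$1 + M$1$2 * v$2 + M$1$3 * v$3 + M$1$4 * v$4,
   M$2$1 * v$1 + M$2$2 * v$2 + M$2$3 * v$3 + M$2$4 * v$4,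
   M$3$1 * v$1 + M$3$2 * v$2 + M$3$3 * v$3 + M$3$4 * v$4,
   M$4$1 * v$1 + M$4$2 * v$2 + M$4$3 * v$3 + M$4$4 * v$4] $ i"
    unfolding matrix_vector_mult_def sum_4 by (elim disjE) simp_all
qed

lemma bracket_zero:
  assumes x: "x \<in> dom_phi" and F: "F \<in> {F1, F2 c}" and G: "G \<in> {F1, F2 c}"
  shows "pbracket Qp F G x = 0"
proof -
  note ne = dom_phiD[OF x]
  obtain u s v t where hx: "x$1 = u" "x$2 = s" "x$3 = v" "x$4 = t" by blast
  have nz: "s \<noteq> 0" "t \<noteq> 0" using ne unfolding hx by simp_all
  have Qv: "\<And>i j. Qp x $ i $ j = qa i j * t + qb i j * s + qe i j * (t * t / s)" unfolding Qp_entry hx ..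
  have g1: "grad F1 x = vector [0, 1 / t, 0, - (s / (t * t))]" unfolding grad_F1[OF ne(2)] hx ..
  have g2: "grad (F2 c) x = vector [2 * (u - v) + c, 0, - (2 * (u - v) + c), 0]" unfolding grad_F2 hx ..
  from F G show ?thesis
    unfolding pbracket_def
    by (elim insertE emptyE; simp only: g1 g2 mv4 Qv inner_vector_4 vector_4;
        simp add: qa_def qb_def qe_def; simp add: field_simps nz)
qed


lemma indep_F:
  assumes y: "y \<in> dom_phi" and k: "2 * (y$1 - y$3) + c \<noteq> 0"
  shows "distinct (map (\<lambda>F. grad F y) [F1, F2 c]) \<and> independent (set (map (\<lambda>F. grad F y) [F1, F2 c]))"
proof -
  note ne = dom_phiD[OF y]
  define a where "a = grad F1 y"
  define b where "b = grad (F2 c) y"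
  have a2: "a $ 2 \<noteq> 0" unfolding a_def grad_F1[OF ne(2)] vector_4 using ne(2) by simp
  have b2: "b $ 2 = 0" unfolding b_def grad_F2 vector_4 by simp
  have b1: "b $ 1 \<noteq> 0" unfolding b_def grad_F2 vector_4 using k by simp
  have ab: "a \<noteq> b" using a2 b2 by auto
  have b0: "b \<noteq> 0" using b1 by auto
  have "a \<notin> span {b}"
  proof
    assume "a \<in> span {b}"
    then obtain r where "a = r *\<^sub>R b" unfolding real_vector.span_singleton by auto
    then have "a $ 2 = r * b $ 2" by simp
    then show False using a2 b2 by simp
  qed
  moreover have "independent {b}"
    by (rule real_vector.independent_insertI) (use b0 real_vector.independent_empty in auto)
  ultimately have "independent (insert a {b})" by (rule real_vector.independent_insertI)
  then show ?thesis using ab unfolding a_def b_def by simp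
qed

lemma density:
  "dom_phi \<subseteq> closure {x \<in> dom_phi. distinct (map (\<lambda>F. grad F x) [F1, F2 c]) \<and> independent (set (map (\<lambda>F. grad F x) [F1, F2 c]))}"
  (is "_ \<subseteq> closure ?S")
proof
  fix x assume x: "x \<in> dom_phi"
  note ne = dom_phiD[OF x]
  show "x \<in> closure ?S"
    unfolding closure_approachable
  proof (intro allI impI)
    fix \<epsilon> :: real assume ep: "\<epsilon> > 0"
    show "\<exists>y\<in>?S. dist y x < \<epsilon>"
    proof (cases "2 * (x$1 - x$3) + c = 0")
      case False
      then show ?thesis using indep_F[OF x False] x ep by (intro bexI[of _ x]) auto
    next
      case True
      define \<delta> where "\<delta> = min (\<epsilon>/2) (\<bar>x$1 - x$3\<bar>/2)"
      have dpos: "\<delta> > 0" unfolding \<delta>_def using ep ne(4) by simp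
      have dle: "\<delta> < \<bar>x$1 - x$3\<bar>" unfolding \<delta>_def using ne(4) by (auto simp: min_less_iff_disj)
      have dle2: "\<delta> < \<epsilon>" unfolding \<delta>_def using ep by simp
      define y where "y = x + \<delta> *\<^sub>R axis 1 (1::real)"
      have yc: "y$1 = x$1 + \<delta>" "y$2 = x$2" "y$3 = x$3" "y$4 = x$4" by (simp_all add: y_def axis_def)
      have w: "y$1 - y$3 \<noteq> 0"
      proof
        assume "y$1 - y$3 = 0"
        then have "x$1 - x$3 = - \<delta>" using yc by simp
        then show False using dle dpos by simp
      qed
      have yD: "y \<in> dom_phi" using ne w yc unfolding dom_phi_def by simp
      have k: "2 * (y$1 - y$3) + c \<noteq> 0" using True dpos unfolding yc by simp
      have "dist y x = \<delta>" unfolding y_def dist_norm using dpos by simp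
      then show ?thesis using indep_F[OF yD k] yD dle2 by (intro bexI[of _ y]) auto
    qed
  qed
qed

lemma rank_le: "rank (Qp x) \<le> 2 * 2"
  using rank_bound[of "Qp x"] by simp

lemma rank_eq: "\<exists>x\<in>dom_phi. rank (Qp x) = 2 * 2"
proof
  define x0 :: "real^4" where "x0 = vector [1, 2, 0, 1]"
  show "x0 \<in> dom_phi" unfolding dom_phi_def x0_def by simp
  have "det (Qp x0) = 64"
    unfolding det_4 Qp_entry x0_def vector_4 by (simp add: qa_def qb_def qe_def)
  then have "\<not> rank (Qp x0) < CARD(4)" using det_eq_0_rank[of "Qp x0"] by simp
  then show "rank (Qp x0) = 2 * 2" using rank_bound[of "Qp x0"] by simp
qed

lemma preserves_omega: "preserves_poisson (phi_map c) (omega c) dom_phi"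
  unfolding preserves_poisson_def
  using phi_deriv jacobian_phi omega_preserve by (auto simp: differentiable_def)

lemma preserves_Qp: "preserves_poisson (phi_map c) Qp dom_phi"
  unfolding preserves_poisson_def
  using phi_deriv jacobian_phi Qp_preserve by (auto simp: differentiable_def)

lemma liouville_part: "liouville_integrable (phi_map c) dom_phi"
  unfolding liouville_integrable_def
proof (intro exI[of _ Qp] exI[of _ "2::nat"] exI[of _ "[F1, F2 c]"] conjI)
  show "poisson_structure Qp dom_phi" by (rule Qp_poisson)
  show "preserves_poisson (phi_map c) Qp dom_phi" by (rule preserves_Qp)
  show "\<forall>x\<in>dom_phi. rank (Qp x) \<le> 2 * 2" using rank_le by blast
  show "\<exists>x\<in>dom_phi. rank (Qp x) = 2 * 2" by (rule rank_eq)
  show "length [F1, F2 c] = CARD(4) - 2" by simp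
  show "\<forall>F\<in>set [F1, F2 c]. \<forall>x\<in>dom_phi. F differentiable at x"
  proof (intro ballI)
    fix F x assume F: "F \<in> set [F1, F2 c]" and x: "x \<in> dom_phi"
    have "F1 differentiable at x" using F1_deriv[OF dom_phiD(2)[OF x]] by (auto simp: differentiable_def)
    moreover have "F2 c differentiable at x" using F2_deriv by (auto simp: differentiable_def)
    ultimately show "F differentiable at x" using F by auto
  qed
  show "\<forall>F\<in>set [F1, F2 c]. \<forall>x\<in>dom_phi. phi_map c x \<in> dom_phi \<longrightarrow> F (phi_map c x) = F x"
    using F1_inv F2_inv by auto
  show "\<forall>F\<in>set [F1, F2 c]. \<forall>G\<in>set [F1, F2 c]. \<forall>x\<in>dom_phi. pbracket Qp F G x = 0"
    using bracket_zero by simp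
  show "dom_phi \<subseteq> closure {x \<in> dom_phi. distinct (map (\<lambda>F. grad F x) [F1, F2 c]) \<and> independent (set (map (\<lambda>F. grad F x) [F1, F2 c]))}"
    by (rule density)
qed

theorem proposition3p2:
  fixes p q :: complex
  assumes "p - q \<in> \<real>"
  defines "c \<equiv> Re (p - q)"
  shows "measure_preserving_density (phi_map c) (\<lambda>x. n_fun c x * d_fun c x) dom_phi \<and>
         poisson_structure (omega c) dom_phi \<and> preserves_poisson (phi_map c) (omega c) dom_phi \<and>
         liouville_integrable (phi_map c) dom_phi"
  using measure_part omega_poisson preserves_omega liouville_part by blast

end
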